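(* Let $(X,d,\kappa)$ be a digital metric space that is $\kappa$-connected, and suppose there are constants $M_1 \ge M_2 > 0$ such that for all $x,y\in X$, $x \ne y$ implies $d(x,y) \ge M_2$, and $x \leftrightarrow_\kappa y$ implies $d(x,y) \le M_1$. Let $f: X \to X$ be a digital contraction map with multiplier $\alpha$ such that $\alpha < M_2/M_1$. Then $f$ is a constant function.
   Context: A digital metric space is a triple $(X,d,\kappa)$ with $X\subset\mathbb{Z}^n$, $\kappa$ an adjacency relation on $X$ (written $x \leftrightarrow_\kappa y$), and $d$ a metric on $X$. $X$ is $\kappa$-connected if any two points are joined by a finite sequence of points of $X$ in which consecutive points are $\kappa$-adjacent. $f$ is a digital contraction map with multiplier $\alpha \in (0,1)$ if $d(f(x),f(y)) \le \alpha\, d(x,y)$ for all $x,y \in X$. *)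

theory Defs
  imports "HOL-Analysis.Analysis"
begin

text \<open>Points of Z^n are modelled as vectors int ^ 'n (dimension given by the finite type 'n).
  An adjacency relation is a binary relation kappa on points.\<close>

definition metric_on :: "'a set \<Rightarrow> ('a \<Rightarrow> 'a \<Rightarrow> real) \<Rightarrow> bool" where
  "metric_on X d \<longleftrightarrow>
     (\<forall>x\<in>X. \<forall>y\<in>X. 0 \<le> d x y \<and> (d x y = 0 \<longleftrightarrow> x = y) \<and> d x y = d y x) \<and>
     (\<forall>x\<in>X. \<forall>y\<in>X. \<forall>z\<in>X. d x z \<le> d x y + d y z)"

definition kappa_connected :: "'a set \<Rightarrow> ('a \<Rightarrow> 'a \<Rightarrow> bool) \<Rightarrow> bool" where
  "kappa_connected X kappa \<longleftrightarrow>
     (\<forall>x\<in>X. \<forall>y\<in>X. \<exists>p::'a list. p \<noteq> [] \<and> hd p = x \<and> last p = y \<and> set p \<subseteq> X \<and>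
        (\<forall>i. Suc i < length p \<longrightarrow> kappa (p ! i) (p ! Suc i)))"

definition digital_contraction :: "'a set \<Rightarrow> ('a \<Rightarrow> 'a \<Rightarrow> real) \<Rightarrow> real \<Rightarrow> ('a \<Rightarrow> 'a) \<Rightarrow> bool" where
  "digital_contraction X d \<alpha> f \<longleftrightarrow>
     0 < \<alpha> \<and> \<alpha> < 1 \<and> f ` X \<subseteq> X \<and>
     (\<forall>x\<in>X. \<forall>y\<in>X. d (f x) (f y) \<le> \<alpha> * d x y)"

end

theory Submission
  imports Defs
begin

lemma chain_const:
  assumes adj: "\<forall>x\<in>X. \<forall>y\<in>X. kappa x y \<longrightarrow> g x = g y"
  shows "p \<noteq> [] \<Longrightarrow> set p \<subseteq> X \<Longrightarrow> (\<forall>i. Suc i < length p \<longrightarrow> kappa (p ! i) (p ! Suc i))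
    \<Longrightarrow> g (hd p) = g (last p)"
proof (induction p)
  case Nil
  then show ?case by simp
next
  case (Cons a p)
  show ?case
  proof (cases p)
    case Nil
    then show ?thesis by simp
  next
    case (Cons b q)
    have k: "kappa a b" using Cons.prems(3) Cons by (metis length_Cons nth_Cons_0 nth_Cons_Suc zero_less_Suc Suc_less_eq)
    have ih: "g (hd p) = g (last p)"
      using Cons.IH Cons.prems Cons
      by (metis (no_types, lifting) Suc_less_eq length_Cons list.distinct(1) nth_Cons_Suc set_subset_Cons subset_trans)
    have "g a = g b" using adj k Cons.prems(2) Cons by auto
    then show ?thesis using ih Cons by simp
  qed
qed

theorem mainTheorem5:
  fixes X :: "(int ^ 'n) set"
    and d :: "int ^ 'n \<Rightarrow> int ^ 'n \<Rightarrow> real"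
    and kappa :: "int ^ 'n \<Rightarrow> int ^ 'n \<Rightarrow> bool"
    and f :: "int ^ 'n \<Rightarrow> int ^ 'n"
    and M1 M2 \<alpha> :: real
  assumes "metric_on X d"
    and "kappa_connected X kappa"
    and "M1 \<ge> M2" and "M2 > 0"
    and "\<forall>x\<in>X. \<forall>y\<in>X. x \<noteq> y \<longrightarrow> d x y \<ge> M2"
    and "\<forall>x\<in>X. \<forall>y\<in>X. kappa x y \<longrightarrow> d x y \<le> M1"
    and "digital_contraction X d \<alpha> f"
    and "\<alpha> < M2 / M1"
  shows "\<exists>c. \<forall>x\<in>X. f x = c"
proof -
  have M1: "M1 > 0" using assms(3,4) by linarith
  have aM: "\<alpha> * M1 < M2" using assms(8) M1 by (simp add: pos_less_divide_eq)
  have apos: "0 < \<alpha>" and fX: "f ` X \<subseteq> X" and con: "\<forall>x\<in>X. \<forall>y\<in>X. d (f x) (f y) \<le> \<alpha> * d x y"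
    using assms(7) unfolding digital_contraction_def by auto
  have adj: "\<forall>x\<in>X. \<forall>y\<in>X. kappa x y \<longrightarrow> f x = f y"
  proof (intro ballI impI)
    fix x y assume x: "x \<in> X" and y: "y \<in> X" and k: "kappa x y"
    have "d x y \<le> M1" using assms(6) x y k by auto
    hence "\<alpha> * d x y \<le> \<alpha> * M1" using apos by simp
    hence "d (f x) (f y) < M2" using con x y aM by force
    moreover have "f x \<in> X" "f y \<in> X" using fX x y by auto
    ultimately show "f x = f y" using assms(5) by force
  qed
  show ?thesis
  proof (cases "X = {}")
    case True then show ?thesis by simp
  next
    case False
    then obtain x0 where x0: "x0 \<in> X" by auto
    have "\<forall>x\<in>X. f x = f x0"
    proof
      fix x assume x: "x \<in> X"
      obtain p where "p \<noteq> []" "hd p = x" "last p = x0" "set p \<subseteq> X"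
        "\<forall>i. Suc i < length p \<longrightarrow> kappa (p ! i) (p ! Suc i)"
        using assms(2) x x0 unfolding kappa_connected_def by blast
      then show "f x = f x0" using chain_const[OF adj] by metis
    qed
    then show ?thesis by blast
  qed
qed

end
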